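(* Let $I,J\subseteq\mathbb{R}$ be (possibly unbounded) intervals and let $f:I\times J\to\mathbb{R}$ be such that $\int f\,d\alpha=\int f\,d\beta$ whenever $\alpha$ and $\beta$ are competitors concentrated on $I\times J$. Then $f$ admits a representation $f(x,y)=\phi(x)+\psi(y)+k(x)y$ for some functions $\phi,k$ on $I$ and $\psi$ on $J$.
   Context: For a finite measure $\alpha$ on $\mathbb{R}^2$ write $\alpha_0,\alpha_1$ for its marginals and $(\alpha_x)_x$ for a disintegration with respect to $\alpha_0$. Two finite measures $\alpha,\beta$ on $\mathbb{R}^2$ are competitors if they have the same first and second marginals and for $\alpha_0$-a.e. $x$, $\int y\,\alpha_x(dy)=\int y\,\beta_x(dy)$. *)

theory Defs
  imports "HOL-Probability.Probability"
begin

definition marg0 :: "(real \<times> real) measure \<Rightarrow> real measure" where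
  "marg0 \<alpha> = distr \<alpha> borel fst"

definition marg1 :: "(real \<times> real) measure \<Rightarrow> real measure" where
  "marg1 \<alpha> = distr \<alpha> borel snd"

definition disintegration :: "(real \<times> real) measure \<Rightarrow> (real \<Rightarrow> real measure) \<Rightarrow> bool" where
  "disintegration \<alpha> K \<longleftrightarrow>
     K \<in> measurable borel (prob_algebra borel) \<and>
     (\<forall>A \<in> sets borel. \<forall>B \<in> sets borel.
        emeasure \<alpha> (A \<times> B) = (\<integral>\<^sup>+ x \<in> A. emeasure (K x) B \<partial>marg0 \<alpha>))"

definition competitors :: "(real \<times> real) measure \<Rightarrow> (real \<times> real) measure \<Rightarrow> bool" where
  "competitors \<alpha> \<beta> \<longleftrightarrow>
     finite_measure \<alpha> \<and> finite_measure \<beta> \<and>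
     sets \<alpha> = sets borel \<and> sets \<beta> = sets borel \<and>
     marg0 \<alpha> = marg0 \<beta> \<and> marg1 \<alpha> = marg1 \<beta> \<and>
     (\<exists>K L. disintegration \<alpha> K \<and> disintegration \<beta> L \<and>
        (AE x in marg0 \<alpha>. integrable (K x) (\<lambda>y. y) \<and> integrable (L x) (\<lambda>y. y) \<and>
           (\<integral> y. y \<partial>K x) = (\<integral> y. y \<partial>L x)))"

definition concentrated_on :: "(real \<times> real) measure \<Rightarrow> (real \<times> real) set \<Rightarrow> bool" where
  "concentrated_on \<alpha> S \<longleftrightarrow> (AE z in \<alpha>. z \<in> S)"

end

theory Submission
  imports Defs
begin

definition Mb :: "'a::topological_space pmf \<Rightarrow> 'a measure" where
  "Mb p = distr (measure_pmf p) borel id"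

lemma Mb_sets[simp]: "sets (Mb p) = sets borel"
  by (simp add: Mb_def)

lemma Mb_space[simp]: "space (Mb p) = UNIV"
  by (simp add: Mb_def)

lemma Mb_prob: "prob_space (Mb p)"
  unfolding Mb_def by (rule measure_pmf.prob_space_distr) simp

lemma Mb_emeasure: "A \<in> sets borel \<Longrightarrow> emeasure (Mb p) A = emeasure (measure_pmf p) A"
  unfolding Mb_def by (subst emeasure_distr) auto

lemma Mb_distr:
  assumes "g \<in> borel_measurable borel"
  shows "distr (Mb p) borel g = Mb (map_pmf g p)"
proof (rule measure_eqI)
  fix A assume A: "A \<in> sets (distr (Mb p) borel g)"
  hence A': "A \<in> sets borel" by simp
  have "emeasure (distr (Mb p) borel g) A = emeasure (Mb p) (g -` A \<inter> space (Mb p))"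
    using assms A by (subst emeasure_distr) (auto simp: Mb_def)
  also have "\<dots> = emeasure (measure_pmf p) (g -` A)"
    using assms A' by (subst Mb_emeasure) (auto intro: measurable_sets_borel)
  also have "\<dots> = emeasure (Mb (map_pmf g p)) A"
    using A' by (simp add: Mb_emeasure)
  finally show "emeasure (distr (Mb p) borel g) A = emeasure (Mb (map_pmf g p)) A" .
qed simp

definition jp :: "real pmf \<Rightarrow> (real \<Rightarrow> real pmf) \<Rightarrow> (real \<times> real) pmf" where
  "jp \<mu> Kp = bind_pmf \<mu> (\<lambda>x. map_pmf (Pair x) (Kp x))"

lemma jp_fst: "map_pmf fst (jp \<mu> Kp) = \<mu>"
  by (simp add: jp_def map_bind_pmf map_pmf_comp o_def bind_return_pmf' flip: map_pmf_def)

lemma jp_snd: "map_pmf snd (jp \<mu> Kp) = bind_pmf \<mu> Kp"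
  by (simp add: jp_def map_bind_pmf map_pmf_comp o_def)

lemma marg0_jp: "marg0 (Mb (jp \<mu> Kp)) = Mb \<mu>"
  unfolding marg0_def by (subst Mb_distr) (auto simp: jp_fst simp flip: borel_prod)

lemma marg1_jp: "marg1 (Mb (jp \<mu> Kp)) = Mb (bind_pmf \<mu> Kp)"
  unfolding marg1_def by (subst Mb_distr) (auto simp: jp_snd simp flip: borel_prod)

lemma Times_borel: "A \<in> sets borel \<Longrightarrow> B \<in> sets borel \<Longrightarrow> (A \<times> B :: (real \<times> real) set) \<in> sets borel"
  unfolding borel_prod[symmetric] by (rule pair_measureI)

lemma jp_disint:
  assumes K: "(\<lambda>x. Mb (Kp x)) \<in> measurable borel (prob_algebra borel)"
  shows "disintegration (Mb (jp \<mu> Kp)) (\<lambda>x. Mb (Kp x))"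
  unfolding disintegration_def
proof (intro conjI ballI K)
  fix A B :: "real set" assume A: "A \<in> sets borel" and B: "B \<in> sets borel"
  have "emeasure (Mb (jp \<mu> Kp)) (A \<times> B) = emeasure (measure_pmf (jp \<mu> Kp)) (A \<times> B)"
    using A B by (simp add: Mb_emeasure Times_borel)
  also have "\<dots> = (\<integral>\<^sup>+ z. indicator (A \<times> B) z \<partial>measure_pmf (jp \<mu> Kp))"
    by simp
  also have "\<dots> = (\<integral>\<^sup>+ x. indicator A x * emeasure (measure_pmf (Kp x)) B \<partial>\<mu>)"
    unfolding jp_def nn_integral_bind_pmf nn_integral_map_pmf
    by (intro nn_integral_cong) (simp add: indicator_times nn_integral_cmult_indicator)
  also have "\<dots> = (\<integral>\<^sup>+ x. emeasure (Mb (Kp x)) B * indicator A x \<partial>Mb \<mu>)"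
  proof -
    have m: "(\<lambda>x. emeasure (Mb (Kp x)) B * indicator A x) \<in> borel_measurable borel"
      using A B measurable_compose[OF measurable_prob_algebraD[OF K] measurable_emeasure_subprob_algebra[of B borel]]
      by measurable
    show ?thesis unfolding Mb_def[of \<mu>]
      using B m by (subst nn_integral_distr) (auto simp: Mb_emeasure mult.commute)
  qed
  finally show "emeasure (Mb (jp \<mu> Kp)) (A \<times> B) = (\<integral>\<^sup>+ x\<in>A. emeasure (Mb (Kp x)) B \<partial>marg0 (Mb (jp \<mu> Kp)))"
    by (simp add: marg0_jp)
qed

lemma integral_bind_pmf_fin:
  fixes h :: "'b \<Rightarrow> real"
  assumes fin: "finite (set_pmf (bind_pmf M N))"
  shows "integral\<^sup>L (measure_pmf (bind_pmf M N)) h = (\<integral> x. integral\<^sup>L (measure_pmf (N x)) h \<partial>M)"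
proof -
  let ?S = "set_pmf (bind_pmf M N)"
  have "integral\<^sup>L (measure_pmf (bind_pmf M N)) h = (\<Sum>z\<in>?S. h z * pmf (bind_pmf M N) z)"
    using fin by (intro integral_measure_pmf_real) auto
  also have "\<dots> = (\<Sum>z\<in>?S. \<integral> x. h z * pmf (N x) z \<partial>M)"
    by (simp add: pmf_bind)
  also have "\<dots> = (\<integral> x. (\<Sum>z\<in>?S. h z * pmf (N x) z) \<partial>M)"
    by (rule Bochner_Integration.integral_sum[where f="\<lambda>z x. h z * pmf (N x) z", symmetric])
       (auto intro!: integrable_mult_right measure_pmf.integrable_const_bound[where B=1] simp: pmf_le_1)
  also have "\<dots> = (\<integral> x. integral\<^sup>L (measure_pmf (N x)) h \<partial>M)"
  proof (intro integral_cong_AE)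
    show "AE x in M. (\<Sum>z\<in>?S. h z * pmf (N x) z) = integral\<^sup>L (measure_pmf (N x)) h"
      unfolding AE_measure_pmf_iff
      using fin by (auto intro!: integral_measure_pmf_real[symmetric])
  qed auto
  finally show ?thesis .
qed


definition mu :: "real \<Rightarrow> real \<Rightarrow> real pmf" where
  "mu a b = map_pmf (\<lambda>c. if c then a else b) (bernoulli_pmf (1/2))"

lemma set_mu: "set_pmf (mu a b) \<subseteq> {a, b}"
  by (auto simp: mu_def)

lemma Mb_in_space: "Mb P \<in> space (prob_algebra borel)"
  by (simp add: space_prob_algebra Mb_prob)

lemma KA_meas:
  fixes a :: real and P Q :: "real pmf"
  shows "(\<lambda>x. Mb (if x = a then P else Q)) \<in> measurable borel (prob_algebra borel)"
proof -
  have "(\<lambda>x::real. if x = a then Mb P else Mb Q) \<in> measurable borel (prob_algebra borel)"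
    by (rule measurable_If) (auto simp: Mb_in_space)
  moreover have "(\<lambda>x. Mb (if x = a then P else Q)) = (\<lambda>x::real. if x = a then Mb P else Mb Q)"
    by auto
  ultimately show ?thesis by simp
qed

lemma bind_mu_swap:
  assumes "a \<noteq> b"
  shows "bind_pmf (mu a b) (\<lambda>x. if x = a then P else Q) = bind_pmf (mu a b) (\<lambda>x. if x = a then Q else P)"
  using assms by (intro pmf_eqI) (simp add: pmf_bind mu_def)

lemma finite_jp:
  assumes "finite (set_pmf P)" "finite (set_pmf Q)"
  shows "finite (set_pmf (jp (mu a b) (\<lambda>x. if x = a then P else Q)))"
proof -
  have "set_pmf (jp (mu a b) (\<lambda>x. if x = a then P else Q)) \<subseteq> Pair a ` set_pmf P \<union> Pair b ` set_pmf Q"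
    using set_mu[of a b] by (auto simp: jp_def split: if_split_asm)
  thus ?thesis using assms by (meson finite_Un finite_imageI finite_subset)
qed

lemma Mb_integrable_id:
  assumes "finite (set_pmf P)"
  shows "integrable (Mb P) (\<lambda>y::real. y)"
  unfolding Mb_def using assms
  by (subst integrable_distr_eq) (auto intro: integrable_measure_pmf_finite)

lemma Mb_integral_id:
  shows "(\<integral>y. y \<partial>Mb P) = (\<integral>y. (y::real) \<partial>measure_pmf P)"
  unfolding Mb_def by (subst integral_distr) (auto simp: id_def)

lemma competitors_jp:
  assumes ab: "a \<noteq> b" and fin: "finite (set_pmf P)" "finite (set_pmf Q)"
    and mean: "(\<integral>y. y \<partial>measure_pmf P) = (\<integral>y. y \<partial>measure_pmf Q)"
  shows "competitors (Mb (jp (mu a b) (\<lambda>x. if x = a then P else Q)))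
                     (Mb (jp (mu a b) (\<lambda>x. if x = a then Q else P)))"
  unfolding competitors_def
proof (intro conjI exI)
  show "finite_measure (Mb (jp (mu a b) (\<lambda>x. if x = a then P else Q)))"
    using Mb_prob by (simp add: prob_space_def) blast
  show "finite_measure (Mb (jp (mu a b) (\<lambda>x. if x = a then Q else P)))"
    using Mb_prob by (simp add: prob_space_def) blast
  show "marg0 (Mb (jp (mu a b) (\<lambda>x. if x = a then P else Q))) = marg0 (Mb (jp (mu a b) (\<lambda>x. if x = a then Q else P)))"
    by (simp add: marg0_jp)
  show "marg1 (Mb (jp (mu a b) (\<lambda>x. if x = a then P else Q))) = marg1 (Mb (jp (mu a b) (\<lambda>x. if x = a then Q else P)))"
    by (simp add: marg1_jp bind_mu_swap[OF ab])
  show "disintegration (Mb (jp (mu a b) (\<lambda>x. if x = a then P else Q))) (\<lambda>x. Mb (if x = a then P else Q))"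
    by (rule jp_disint[OF KA_meas])
  show "disintegration (Mb (jp (mu a b) (\<lambda>x. if x = a then Q else P))) (\<lambda>x. Mb (if x = a then Q else P))"
    by (rule jp_disint[OF KA_meas])
  have "AE x in marg0 (Mb (jp (mu a b) (\<lambda>x. if x = a then P else Q))). x \<in> {a, b}"
    unfolding marg0_jp unfolding Mb_def using set_mu[of a b]
    by (subst AE_distr_iff) (auto simp: AE_measure_pmf_iff)
  then show "AE x in marg0 (Mb (jp (mu a b) (\<lambda>x. if x = a then P else Q))).
       integrable (Mb (if x = a then P else Q)) (\<lambda>y. y) \<and> integrable (Mb (if x = a then Q else P)) (\<lambda>y. y) \<and>
       (\<integral>y. y \<partial>Mb (if x = a then P else Q)) = (\<integral>y. y \<partial>Mb (if x = a then Q else P))"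
    by (rule eventually_mono) (auto simp: Mb_integrable_id fin Mb_integral_id mean)
qed (simp_all)

lemma concentrated_jp:
  assumes "S \<in> sets borel" "set_pmf p \<subseteq> S"
  shows "concentrated_on (Mb p) S"
  unfolding concentrated_on_def Mb_def using assms
  by (subst AE_distr_iff) (auto simp: AE_measure_pmf_iff)

lemma set_integrable_Mb:
  assumes S: "S \<in> sets borel" and f: "f \<in> borel_measurable (restrict_space borel S)"
    and fin: "finite (set_pmf p)"
  shows "set_integrable (Mb p) S (f :: _ \<Rightarrow> real)"
proof -
  have m: "(\<lambda>z. indicator S z *\<^sub>R f z) \<in> borel_measurable borel"
    using f S by (subst (asm) borel_measurable_restrict_space_iff) auto
  show ?thesis unfolding set_integrable_def Mb_def
    using m fin by (subst integrable_distr_eq) (auto intro: integrable_measure_pmf_finite)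
qed

lemma set_integral_Mb:
  assumes S: "S \<in> sets borel" and f: "f \<in> borel_measurable (restrict_space borel S)"
  shows "(LINT z:S|Mb p. f z) = (\<integral>z. indicator S z * (f :: _ \<Rightarrow> real) z \<partial>measure_pmf p)"
proof -
  have m: "(\<lambda>z. indicator S z *\<^sub>R f z) \<in> borel_measurable borel"
    using f S by (subst (asm) borel_measurable_restrict_space_iff) auto
  show ?thesis unfolding set_lebesgue_integral_def Mb_def
    using m by (subst integral_distr) auto
qed

lemma integral_jp:
  fixes h :: "real \<times> real \<Rightarrow> real"
  assumes "a \<noteq> b" and fin: "finite (set_pmf P)" "finite (set_pmf Q)"
  shows "(\<integral>z. h z \<partial>measure_pmf (jp (mu a b) (\<lambda>x. if x = a then P else Q))) =
     (\<integral>y. h (a, y) \<partial>measure_pmf P) / 2 + (\<integral>y. h (b, y) \<partial>measure_pmf Q) / 2"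
  unfolding jp_def using assms finite_jp[OF fin, of a b]
  by (subst integral_bind_pmf_fin) (auto simp: jp_def mu_def)

definition mix :: "real \<Rightarrow> real \<Rightarrow> real \<Rightarrow> real pmf" where
  "mix t y1 y3 = map_pmf (\<lambda>c. if c then y1 else y3) (bernoulli_pmf t)"

lemma mix_fin: "finite (set_pmf (mix t y1 y3))"
  by (rule finite_subset[of _ "{y1, y3}"]) (auto simp: mix_def)

lemma mix_integral: "0 \<le> t \<Longrightarrow> t \<le> 1 \<Longrightarrow>
   (\<integral>y. h y \<partial>measure_pmf (mix t y1 y3)) = h y1 * t + h y3 * (1 - t)"
  by (simp add: mix_def)

lemma return_integral: "(\<integral>y. (h y :: real) \<partial>measure_pmf (return_pmf c)) = h c"
  by (simp add: return_pmf.rep_eq integral_return)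


lemma set_jp:
  "set_pmf (jp (mu a b) (\<lambda>x. if x = a then P else Q)) \<subseteq> Pair a ` set_pmf P \<union> Pair b ` set_pmf Q"
  using set_mu[of a b] by (auto simp: jp_def split: if_split_asm)

lemma affine_lemma:
  fixes g :: "real \<Rightarrow> real"
  assumes H: "\<And>y1 y3 t. y1 \<in> J \<Longrightarrow> y3 \<in> J \<Longrightarrow> 0 \<le> t \<Longrightarrow> t \<le> 1 \<Longrightarrow>
     g (t * y1 + (1 - t) * y3) = t * g y1 + (1 - t) * g y3"
  shows "\<exists>c d. \<forall>y\<in>J. g y = c + d * y"
proof (cases "\<exists>u\<in>J. \<exists>v\<in>J. u < v")
  case True
  then obtain u v where u: "u \<in> J" and v: "v \<in> J" and uv: "u < v" by blast
  define d where "d = (g v - g u) / (v - u)"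
  define c where "c = g u - d * u"
  have "g y = c + d * y" if y: "y \<in> J" for y
  proof -
    have dd: "(v - u) * d = g v - g u" unfolding d_def using uv by simp
    have "(v - u) * (c + d * y) = (v - u) * g u + ((v - u) * d) * (y - u)"
      unfolding c_def by (simp add: algebra_simps)
    then have cd: "(v - u) * (c + d * y) = (v - u) * g u + (g v - g u) * (y - u)"
      unfolding dd .
    consider "u \<le> y" "y \<le> v" | "y < u" | "v < y" by linarith
    then show ?thesis
    proof cases
      case 1
      define t where "t = (v - y) / (v - u)"
      have t01: "0 \<le> t" "t \<le> 1" using 1 uv by (auto simp: t_def field_simps)
      have e: "(v - u) * t = v - y" using uv by (simp add: t_def)
      have "(v - u) * (t * u + (1 - t) * v) = ((v - u) * t) * u + ((v - u) - (v - u) * t) * v"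
        by (simp add: algebra_simps)
      also have "\<dots> = (v - u) * y" unfolding e by (simp add: algebra_simps)
      finally have yt: "y = t * u + (1 - t) * v" using uv by simp
      have "g y = t * g u + (1 - t) * g v" using H[OF u v t01] yt by simp
      then show ?thesis using uv by (simp add: c_def d_def t_def field_simps)
    next
      case 2
      define t where "t = (v - u) / (v - y)"
      have t01: "0 \<le> t" "t \<le> 1" using 2 uv by (auto simp: t_def field_simps)
      have e: "(v - y) * t = v - u" using uv 2 by (simp add: t_def)
      have "(v - y) * (t * y + (1 - t) * v) = ((v - y) * t) * y + ((v - y) - (v - y) * t) * v"
        by (simp add: algebra_simps)
      also have "\<dots> = (v - y) * u" unfolding e by (simp add: algebra_simps)
      finally have ut: "u = t * y + (1 - t) * v" using uv 2 by simp
      have "g u = t * g y + (1 - t) * g v" using H[OF y v t01] ut by simp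
      then have "(v - y) * g u = (v - y) * (t * g y + (1 - t) * g v)" by simp
      also have "\<dots> = ((v - y) * t) * g y + ((v - y) - (v - y) * t) * g v"
        by (simp add: algebra_simps)
      finally have "(v - y) * g u = ((v - y) * t) * g y + ((v - y) - (v - y) * t) * g v" .
      then have h2: "(v - y) * g u = (v - u) * g y + (u - y) * g v" unfolding e by (simp add: algebra_simps)
      have "(v - u) * g y = (v - u) * (c + d * y)" unfolding cd using h2 by (simp add: algebra_simps)
      then show ?thesis using uv by simp
    next
      case 3
      define t where "t = (y - v) / (y - u)"
      have t01: "0 \<le> t" "t \<le> 1" using 3 uv by (auto simp: t_def field_simps)
      have e: "(y - u) * t = y - v" using uv 3 by (simp add: t_def)
      have "(y - u) * (t * u + (1 - t) * y) = ((y - u) * t) * u + ((y - u) - (y - u) * t) * y"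
        by (simp add: algebra_simps)
      also have "\<dots> = (y - u) * v" unfolding e by (simp add: algebra_simps)
      finally have vt: "v = t * u + (1 - t) * y" using uv 3 by simp
      have "g v = t * g u + (1 - t) * g y" using H[OF u y t01] vt by simp
      then have "(y - u) * g v = (y - u) * (t * g u + (1 - t) * g y)" by simp
      also have "\<dots> = ((y - u) * t) * g u + ((y - u) - (y - u) * t) * g y"
        by (simp add: algebra_simps)
      finally have "(y - u) * g v = ((y - u) * t) * g u + ((y - u) - (y - u) * t) * g y" .
      then have h3: "(y - u) * g v = (y - v) * g u + (v - u) * g y" unfolding e by (simp add: algebra_simps)
      have "(v - u) * g y = (v - u) * (c + d * y)" unfolding cd using h3 by (simp add: algebra_simps)
      then show ?thesis using uv by simp
    qed
  qed
  then show ?thesis by blast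
next
  case False
  show ?thesis
  proof (cases "J = {}")
    case True then show ?thesis by auto
  next
    case False
    then obtain u where u: "u \<in> J" by blast
    with \<open>\<not> (\<exists>u\<in>J. \<exists>v\<in>J. u < v)\<close> have "\<forall>y\<in>J. y = u" by (metis linorder_neqE_linordered_idom)
    then show ?thesis by (intro exI[of _ "g u"] exI[of _ 0]) auto
  qed
qed


theorem lemma4p4:
  fixes I J :: "real set" and f :: "real \<times> real \<Rightarrow> real"
  assumes "is_interval I" and "is_interval J"
    and "f \<in> borel_measurable (restrict_space borel (I \<times> J))"
    and "\<And>\<alpha> \<beta>. competitors \<alpha> \<beta> \<Longrightarrow> concentrated_on \<alpha> (I \<times> J) \<Longrightarrow>
           concentrated_on \<beta> (I \<times> J) \<Longrightarrow>
           set_integrable \<alpha> (I \<times> J) f \<Longrightarrow> set_integrable \<beta> (I \<times> J) f \<Longrightarrow>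
           (LINT z:I \<times> J|\<alpha>. f z) = (LINT z:I \<times> J|\<beta>. f z)"
  shows "\<exists>\<phi> \<psi> k :: real \<Rightarrow> real. \<forall>x\<in>I. \<forall>y\<in>J. f (x, y) = \<phi> x + \<psi> y + k x * y"
proof (cases "I = {}")
  case True then show ?thesis by auto
next
  case False
  then obtain x0 where x0: "x0 \<in> I" by blast
  have SB: "I \<times> J \<in> sets borel"
    using assms(1,2) by (intro Times_borel real_interval_borel_measurable)
  have convJ: "convex J" using assms(2) by (rule is_interval_convex)
  have key: "f (x, t*y1 + (1-t)*y3) - f (x0, t*y1 + (1-t)*y3) =
        t * (f (x, y1) - f (x0, y1)) + (1 - t) * (f (x, y3) - f (x0, y3))"
    if x: "x \<in> I" and xne: "x0 \<noteq> x" and y1: "y1 \<in> J" and y3: "y3 \<in> J" and t: "0 \<le> t" "t \<le> 1"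
    for x y1 y3 t
  proof -
    define y2 where "y2 = t*y1 + (1-t)*y3"
    have y2: "y2 \<in> J" using convexD[OF convJ y1 y3, of t "1 - t"] t by (simp add: y2_def)
    define P where "P = mix t y1 y3"
    define Q where "Q = return_pmf y2"
    have finP: "finite (set_pmf P)" by (simp add: P_def mix_fin)
    have finQ: "finite (set_pmf Q)" by (simp add: Q_def)
    have setP: "set_pmf P \<subseteq> J" using y1 y3 by (auto simp: P_def mix_def)
    have setQ: "set_pmf Q \<subseteq> J" using y2 by (auto simp: Q_def)
    have mean: "(\<integral>y. y \<partial>measure_pmf P) = (\<integral>y. y \<partial>measure_pmf Q)"
      using t by (simp add: P_def Q_def mix_integral return_integral y2_def mult.commute)
    define \<alpha> where "\<alpha> = Mb (jp (mu x0 x) (\<lambda>z. if z = x0 then P else Q))"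
    define \<beta> where "\<beta> = Mb (jp (mu x0 x) (\<lambda>z. if z = x0 then Q else P))"
    have comp: "competitors \<alpha> \<beta>"
      unfolding \<alpha>_def \<beta>_def by (rule competitors_jp[OF xne finP finQ mean])
    have ca: "concentrated_on \<alpha> (I \<times> J)"
      unfolding \<alpha>_def using set_jp[of x0 x P Q] setP setQ x0 x
      by (intro concentrated_jp[OF SB]) auto
    have cb: "concentrated_on \<beta> (I \<times> J)"
      unfolding \<beta>_def using set_jp[of x0 x Q P] setP setQ x0 x
      by (intro concentrated_jp[OF SB]) auto
    have ia: "set_integrable \<alpha> (I \<times> J) f"
      unfolding \<alpha>_def by (rule set_integrable_Mb[OF SB assms(3) finite_jp[OF finP finQ]])
    have ib: "set_integrable \<beta> (I \<times> J) f"
      unfolding \<beta>_def by (rule set_integrable_Mb[OF SB assms(3) finite_jp[OF finQ finP]])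
    have eq: "(LINT z:I \<times> J|\<alpha>. f z) = (LINT z:I \<times> J|\<beta>. f z)"
      by (rule assms(4)[OF comp ca cb ia ib])
    have La: "(LINT z:I \<times> J|\<alpha>. f z) = (f (x0, y1) * t + f (x0, y3) * (1 - t)) / 2 + f (x, y2) / 2"
      unfolding \<alpha>_def using x0 x y1 y2 y3 t
      by (simp add: set_integral_Mb[OF SB assms(3)] integral_jp[OF xne finP finQ] P_def Q_def
          mix_integral return_integral)
    have Lb: "(LINT z:I \<times> J|\<beta>. f z) = f (x0, y2) / 2 + (f (x, y1) * t + f (x, y3) * (1 - t)) / 2"
      unfolding \<beta>_def using x0 x y1 y2 y3 t
      by (simp add: set_integral_Mb[OF SB assms(3)] integral_jp[OF xne finQ finP] P_def Q_def
          mix_integral return_integral)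
    show ?thesis using eq unfolding La Lb y2_def[symmetric] by (simp add: field_simps)
  qed
  have "\<forall>x\<in>I. \<exists>cd. \<forall>y\<in>J. f (x, y) - f (x0, y) = fst cd + snd cd * y"
  proof
    fix x assume x: "x \<in> I"
    show "\<exists>cd. \<forall>y\<in>J. f (x, y) - f (x0, y) = fst cd + snd cd * y"
    proof (cases "x = x0")
      case True then show ?thesis by (intro exI[of _ "(0, 0)"]) simp
    next
      case False
      have "\<exists>c d. \<forall>y\<in>J. f (x, y) - f (x0, y) = c + d * y"
        by (rule affine_lemma[where g="\<lambda>y. f (x, y) - f (x0, y)"])
           (rule key[OF x]; use False in auto)
      then show ?thesis by auto
    qed
  qed
  then obtain F where F: "\<forall>x\<in>I. \<forall>y\<in>J. f (x, y) - f (x0, y) = fst (F x) + snd (F x) * y"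
    by (metis bchoice)
  show ?thesis
    by (intro exI[of _ "\<lambda>x. fst (F x)"] exI[of _ "\<lambda>y. f (x0, y)"] exI[of _ "\<lambda>x. snd (F x)"])
       (use F in \<open>auto simp: algebra_simps\<close>)
qed

end
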